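(* There is an absolute constant $c>0$ such that every connected finite simple undirected graph on $d\ge2$ vertices in which every vertex has degree $1$ or degree at least $3$ has a spanning tree with at least $c\,d$ leaves.
   Context: A leaf of a tree is a vertex of degree 1. *)

theory Defs
  imports Complex_Main
begin

definition simple_graph :: "'a set \<Rightarrow> 'a set set \<Rightarrow> bool" where
  "simple_graph V E \<longleftrightarrow> finite V \<and> (\<forall>e\<in>E. e \<subseteq> V \<and> card e = 2)"

definition adj :: "'a set set \<Rightarrow> 'a \<Rightarrow> 'a \<Rightarrow> bool" where
  "adj E u v \<longleftrightarrow> {u, v} \<in> E"

definition degree :: "'a set set \<Rightarrow> 'a \<Rightarrow> nat" where
  "degree E v = card {e \<in> E. v \<in> e}"

definition is_walk :: "'a set \<Rightarrow> 'a set set \<Rightarrow> 'a list \<Rightarrow> bool" where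
  "is_walk V E xs \<longleftrightarrow> xs \<noteq> [] \<and> set xs \<subseteq> V \<and>
     (\<forall>i. Suc i < length xs \<longrightarrow> adj E (xs ! i) (xs ! Suc i))"

definition connected_graph :: "'a set \<Rightarrow> 'a set set \<Rightarrow> bool" where
  "connected_graph V E \<longleftrightarrow> V \<noteq> {} \<and>
     (\<forall>u\<in>V. \<forall>v\<in>V. \<exists>xs. is_walk V E xs \<and> hd xs = u \<and> last xs = v)"

definition is_cycle :: "'a set \<Rightarrow> 'a set set \<Rightarrow> 'a list \<Rightarrow> bool" where
  "is_cycle V E xs \<longleftrightarrow> length xs \<ge> 3 \<and> distinct xs \<and> is_walk V E xs \<and>
     adj E (last xs) (hd xs)"

definition acyclic_graph :: "'a set \<Rightarrow> 'a set set \<Rightarrow> bool" where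
  "acyclic_graph V E \<longleftrightarrow> \<not> (\<exists>xs. is_cycle V E xs)"

definition is_tree :: "'a set \<Rightarrow> 'a set set \<Rightarrow> bool" where
  "is_tree V E \<longleftrightarrow> simple_graph V E \<and> connected_graph V E \<and> acyclic_graph V E"

definition spanning_tree :: "'a set \<Rightarrow> 'a set set \<Rightarrow> 'a set set \<Rightarrow> bool" where
  "spanning_tree V E T \<longleftrightarrow> T \<subseteq> E \<and> is_tree V T"

definition leaves :: "'a set \<Rightarrow> 'a set set \<Rightarrow> 'a set" where
  "leaves V E = {v \<in> V. degree E v = 1}"

end

theory Submission
  imports Defs
begin


definition nbr :: "'a set set \<Rightarrow> 'a \<Rightarrow> 'a set" where
  "nbr E v = {u. adj E v u}"

lemma adj_sym: "adj E u v = adj E v u" by (simp add: adj_def insert_commute)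

lemma adj_V: assumes "simple_graph V E" "adj E u v" shows "u \<in> V" "v \<in> V" "u \<noteq> v"
  using assms by (auto simp: simple_graph_def adj_def)

lemma nbr_V: "simple_graph V E \<Longrightarrow> nbr E v \<subseteq> V"
  using adj_V(2) by (auto simp: nbr_def)

lemma finite_nbr: "simple_graph V E \<Longrightarrow> finite (nbr E v)"
  using nbr_V by (metis finite_subset simple_graph_def)

lemma degree_nbr: assumes "simple_graph V E" shows "degree E v = card (nbr E v)"
proof -
  have eq: "{e \<in> E. v \<in> e} = (\<lambda>u. {v,u}) ` nbr E v"
  proof
    show "{e \<in> E. v \<in> e} \<subseteq> (\<lambda>u. {v,u}) ` nbr E v"
    proof
      fix e assume "e \<in> {e \<in> E. v \<in> e}"
      hence e: "e \<in> E" "v \<in> e" by auto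
      then have "card e = 2" using assms by (auto simp: simple_graph_def)
      then obtain a b where ab: "e = {a,b}" "a \<noteq> b" by (meson card_2_iff)
      then have "e = {v, (if a = v then b else a)}" using e by auto
      moreover have "(if a = v then b else a) \<in> nbr E v" using e ab calculation
        by (simp add: nbr_def adj_def)
      ultimately show "e \<in> (\<lambda>u. {v,u}) ` nbr E v" by blast
    qed
  next
    show "(\<lambda>u. {v,u}) ` nbr E v \<subseteq> {e \<in> E. v \<in> e}"
      by (auto simp: nbr_def adj_def)
  qed
  have inj: "inj_on (\<lambda>u. {v,u}) (nbr E v)"
    by (auto simp: inj_on_def doubleton_eq_iff)
  show ?thesis unfolding degree_def eq using card_image[OF inj] by simp
qed

lemma walk_Cons: "is_walk V E (a # xs) \<longleftrightarrow> a \<in> V \<and> (xs = [] \<or> adj E a (hd xs) \<and> is_walk V E xs)"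
  apply (cases xs)
   apply (simp add: is_walk_def)
  apply (auto simp: is_walk_def nth_Cons split: nat.splits)
  done

lemma walk_append_tl:
  "is_walk V E xs \<Longrightarrow> is_walk V E ys \<Longrightarrow> last xs = hd ys \<Longrightarrow> is_walk V E (xs @ tl ys)"
proof (induction xs)
  case Nil then show ?case by (simp add: is_walk_def)
next
  case (Cons a xs)
  show ?case
  proof (cases "xs = []")
    case True
    have "ys \<noteq> []" using Cons.prems(2) by (simp add: is_walk_def)
    then have "a # tl ys = ys" using Cons.prems(3) True by (cases ys) auto
    have "(a # xs) @ tl ys = a # tl ys" using True by simp
    then show ?thesis using Cons.prems(2) \<open>a # tl ys = ys\<close> by argo
  next
    case False
    then have "is_walk V E xs" "a \<in> V" "adj E a (hd xs)" using Cons.prems(1) walk_Cons[of V E a xs] by simp_all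
    have "is_walk V E (xs @ tl ys)" using Cons.IH[OF \<open>is_walk V E xs\<close> Cons.prems(2)] Cons.prems(3) False by simp
    then show ?thesis using False \<open>a \<in> V\<close> \<open>adj E a (hd xs)\<close> walk_Cons[of V E a "xs @ tl ys"] by simp
  qed
qed

lemma last_append_tl: "ys \<noteq> [] \<Longrightarrow> xs \<noteq> [] \<Longrightarrow> last xs = hd ys \<Longrightarrow> last (xs @ tl ys) = last ys"
  by (cases ys) auto

lemma walk_cross:
  "is_walk V E xs \<Longrightarrow> hd xs \<in> S \<Longrightarrow> last xs \<notin> S \<Longrightarrow> \<exists>a b. a \<in> S \<and> b \<notin> S \<and> adj E a b"
proof (induction xs)
  case Nil then show ?case by (simp add: is_walk_def)
next
  case (Cons a xs)
  then have xs: "xs \<noteq> []" by auto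
  then have w: "is_walk V E xs" "adj E a (hd xs)" using Cons.prems(1) walk_Cons[of V E a xs] by simp_all
  show ?case
  proof (cases "hd xs \<in> S")
    case True then show ?thesis using Cons w xs by auto
  next
    case False then show ?thesis using Cons w by auto
  qed
qed

lemma frontier:
  assumes "simple_graph V E" "connected_graph V E" "S \<subseteq> V" "S \<noteq> {}" "S \<noteq> V"
  shows "\<exists>x y. x \<in> S \<and> y \<in> V \<and> y \<notin> S \<and> adj E x y"
proof -
  obtain u v where uv: "u \<in> S" "v \<in> V" "v \<notin> S" using assms by blast
  then obtain xs where "is_walk V E xs" "hd xs = u" "last xs = v"
    using assms unfolding connected_graph_def by blast
  then obtain a b where ab: "a \<in> S" "b \<notin> S" "adj E a b"
    using walk_cross[of V E xs S] uv by auto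
  have "b \<in> V" by (rule adj_V(2)[OF assms(1) ab(3)])
  then show ?thesis using ab by blast
qed

definition valid :: "'a set \<Rightarrow> 'a set set \<Rightarrow> 'a \<Rightarrow> 'a set \<Rightarrow> ('a \<Rightarrow> 'a) \<Rightarrow> ('a \<Rightarrow> nat) \<Rightarrow> bool" where
  "valid V E r S p rk \<longleftrightarrow> r \<in> S \<and> S \<subseteq> V \<and> (\<forall>v\<in>S-{r}. p v \<in> S \<and> {v, p v} \<in> E \<and> rk (p v) < rk v)"

definition Lf :: "'a set \<Rightarrow> 'a \<Rightarrow> ('a \<Rightarrow> 'a) \<Rightarrow> 'a set" where
  "Lf S r p = {v \<in> S - {r}. \<forall>u\<in>S-{r}. p u \<noteq> v}"

definition Dd :: "'a set set \<Rightarrow> 'a set \<Rightarrow> 'a \<Rightarrow> ('a \<Rightarrow> 'a) \<Rightarrow> 'a set" where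
  "Dd E S r p = {v \<in> Lf S r p. nbr E v \<subseteq> S}"

lemma attach:
  assumes val: "valid V E r S p rk" and fin: "finite V" and x: "x \<in> S" and AS: "A \<inter> S = {}"
    and AV: "A \<subseteq> V" and Ax: "\<forall>a\<in>A. {a,x} \<in> E" and Ane: "A \<noteq> {}"
  shows "valid V E r (S \<union> A) (\<lambda>v. if v \<in> A then x else p v) (\<lambda>v. if v \<in> A then Suc (Max (rk ` S)) else rk v)"
    and "Lf (S \<union> A) r (\<lambda>v. if v \<in> A then x else p v) = (Lf S r p - {x}) \<union> A"
proof -
  have finS: "finite S" using val fin finite_subset by (auto simp: valid_def)
  have mx: "rk x < Suc (Max (rk ` S))" using finS x by (simp add: le_imp_less_Suc)
  have rA: "r \<notin> A" using val AS by (auto simp: valid_def)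
  show "valid V E r (S \<union> A) (\<lambda>v. if v \<in> A then x else p v) (\<lambda>v. if v \<in> A then Suc (Max (rk ` S)) else rk v)"
    unfolding valid_def
  proof (intro conjI ballI)
    show "r \<in> S \<union> A" using val by (simp add: valid_def)
    show "S \<union> A \<subseteq> V" using val AV by (auto simp: valid_def)
  next
    fix v assume v: "v \<in> S \<union> A - {r}"
    show "(if v \<in> A then x else p v) \<in> S \<union> A"
      using v val x by (auto simp: valid_def)
    show "{v, if v \<in> A then x else p v} \<in> E"
      using v val Ax by (auto simp: valid_def)
    show "(if (if v \<in> A then x else p v) \<in> A then Suc (Max (rk ` S)) else rk (if v \<in> A then x else p v))
          < (if v \<in> A then Suc (Max (rk ` S)) else rk v)"
    proof (cases "v \<in> A")
      case True then show ?thesis using mx x AS by auto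
    next
      case False
      then have "v \<in> S - {r}" using v by auto
      then have "p v \<in> S" "rk (p v) < rk v" using val by (auto simp: valid_def)
      then show ?thesis using False AS by auto
    qed
  qed
  show "Lf (S \<union> A) r (\<lambda>v. if v \<in> A then x else p v) = (Lf S r p - {x}) \<union> A"
  proof (rule set_eqI, rule iffI)
    fix v assume v: "v \<in> Lf (S \<union> A) r (\<lambda>v. if v \<in> A then x else p v)"
    then have v1: "v \<in> S \<union> A" "v \<noteq> r" and v2: "\<forall>u\<in>(S \<union> A)-{r}. (if u \<in> A then x else p u) \<noteq> v"
      unfolding Lf_def by auto
    show "v \<in> (Lf S r p - {x}) \<union> A"
    proof (cases "v \<in> A")
      case False
      then have "v \<in> S" using v1 by auto
      moreover have "\<forall>u\<in>S-{r}. p u \<noteq> v"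
      proof
        fix u assume "u \<in> S - {r}"
        then have "u \<notin> A" "u \<in> (S \<union> A)-{r}" using AS by auto
        then show "p u \<noteq> v" using v2 by force
      qed
      moreover obtain a where "a \<in> A" using Ane by auto
      moreover have "v \<noteq> x" using v2 \<open>a \<in> A\<close> rA by force
      ultimately show ?thesis using v1 unfolding Lf_def by auto
    qed simp
  next
    fix v assume v: "v \<in> (Lf S r p - {x}) \<union> A"
    show "v \<in> Lf (S \<union> A) r (\<lambda>v. if v \<in> A then x else p v)"
    proof (cases "v \<in> A")
      case True
      have "\<forall>u\<in>(S \<union> A)-{r}. (if u \<in> A then x else p u) \<noteq> v"
      proof
        fix u assume u: "u \<in> (S \<union> A)-{r}"
        show "(if u \<in> A then x else p u) \<noteq> v"
        proof (cases "u \<in> A")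
          case True then show ?thesis using x AS \<open>v \<in> A\<close> by auto
        next
          case False then have "u \<in> S - {r}" using u by auto
          then have "p u \<in> S" using val by (auto simp: valid_def)
          then show ?thesis using False AS \<open>v \<in> A\<close> by auto
        qed
      qed
      moreover have "v \<in> S \<union> A - {r}" using True rA by auto
      ultimately show ?thesis unfolding Lf_def by blast
    next
      case False
      then have v3: "v \<in> S" "v \<noteq> r" "v \<noteq> x" "\<forall>u\<in>S-{r}. p u \<noteq> v" using v unfolding Lf_def by auto
      have "\<forall>u\<in>(S \<union> A)-{r}. (if u \<in> A then x else p u) \<noteq> v"
      proof
        fix u assume u: "u \<in> (S \<union> A)-{r}"
        show "(if u \<in> A then x else p u) \<noteq> v"
        proof (cases "u \<in> A")
          case True then show ?thesis using v3(3) by simp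
        next
          case False then have "u \<in> S - {r}" using u by blast
          then show ?thesis using False v3(4) by simp
        qed
      qed
      moreover have "v \<in> S \<union> A - {r}" using v3 by blast
      ultimately show ?thesis unfolding Lf_def by blast
    qed
  qed
qed



lemma card_LA: "finite L \<Longrightarrow> finite A \<Longrightarrow> L \<inter> A = {} \<Longrightarrow>
   card ((L - {x}) \<union> A) + (if x \<in> L then 1 else 0) = card L + card A"
  apply (cases "x \<in> L")
   apply (simp_all add: card_Un_disjoint card_Diff_singleton_if disjoint_iff)
  apply (metis Suc_pred card_gt_0_iff empty_iff)
  done

lemma valid_fin: "valid V E r S p rk \<Longrightarrow> finite V \<Longrightarrow> finite S"
  by (auto simp: valid_def intro: finite_subset)

lemma Lf_sub: "Lf S r p \<subseteq> S" by (auto simp: Lf_def)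
lemma Dd_sub: "Dd E S r p \<subseteq> Lf S r p" by (auto simp: Dd_def)
lemma Dd_sub2: "Dd E S r p \<subseteq> S" by (auto simp: Dd_def Lf_def)
lemma fin_Dd: "finite S \<Longrightarrow> finite (Dd E S r p)" using Dd_sub2 finite_subset by metis

lemma attach_full:
  assumes G: "simple_graph V E" and val: "valid V E r S p rk" and x: "x \<in> S"
    and AS: "A \<inter> S = {}" and An: "A \<subseteq> nbr E x" and Ane: "A \<noteq> {}"
  shows "\<exists>p' rk'. valid V E r (S \<union> A) p' rk' \<and>
     card (Lf (S \<union> A) r p') + (if x \<in> Lf S r p then 1 else 0) = card (Lf S r p) + card A \<and>
     Lf S r p - {x} \<subseteq> Lf (S \<union> A) r p' \<and> A \<subseteq> Lf (S \<union> A) r p'"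
proof -
  have fin: "finite V" using G by (simp add: simple_graph_def)
  have AV: "A \<subseteq> V" using An nbr_V[OF G] by blast
  have Ax: "\<forall>a\<in>A. {a,x} \<in> E"
  proof
    fix a assume "a \<in> A"
    then have "{x,a} \<in> E" using An by (auto simp: nbr_def adj_def)
    then show "{a,x} \<in> E" by (simp add: insert_commute)
  qed
  note at = attach[OF val fin x AS AV Ax Ane]
  have finS: "finite S" using valid_fin[OF val fin] .
  have f1: "finite (Lf S r p)" using finite_subset[OF Lf_sub finS] .
  have f2: "finite A" using finite_subset[OF AV fin] .
  have f3: "Lf S r p \<inter> A = {}" using AS Lf_sub[of S r p] by blast
  have "card ((Lf S r p - {x}) \<union> A) + (if x \<in> Lf S r p then 1 else 0) = card (Lf S r p) + card A"
    using card_LA[OF f1 f2 f3] .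
  then have "valid V E r (S \<union> A) (\<lambda>v. if v \<in> A then x else p v) (\<lambda>v. if v \<in> A then Suc (Max (rk ` S)) else rk v) \<and>
     card (Lf (S \<union> A) r (\<lambda>v. if v \<in> A then x else p v)) + (if x \<in> Lf S r p then 1 else 0) = card (Lf S r p) + card A \<and>
     Lf S r p - {x} \<subseteq> Lf (S \<union> A) r (\<lambda>v. if v \<in> A then x else p v) \<and> A \<subseteq> Lf (S \<union> A) r (\<lambda>v. if v \<in> A then x else p v)"
    using at(1) unfolding at(2) by blast
  then show ?thesis by blast
qed

abbreviation inv where
  "inv V E r S p \<equiv> card S \<le> 3 * card (Lf S r p) + card (Dd E S r p) + 1"

lemma caseA:
  assumes G: "simple_graph V E" and val: "valid V E r S p rk" and iv: "inv V E r S p"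
    and x: "x \<in> S" and Ane: "nbr E x - S \<noteq> {}"
    and c: "x \<notin> Lf S r p \<or> card (nbr E x - S) \<ge> 2"
  shows "\<exists>S' p' rk'. S \<subset> S' \<and> valid V E r S' p' rk' \<and> inv V E r S' p'"
proof -
  define A where "A = nbr E x - S"
  have fin: "finite V" using G by (simp add: simple_graph_def)
  have finS: "finite S" using valid_fin[OF val fin] .
  have finA: "finite A" using finite_nbr[OF G] by (simp add: A_def)
  obtain p' rk' where h: "valid V E r (S \<union> A) p' rk'"
     "card (Lf (S \<union> A) r p') + (if x \<in> Lf S r p then 1 else 0) = card (Lf S r p) + card A"
     "Lf S r p - {x} \<subseteq> Lf (S \<union> A) r p'"
    using attach_full[OF G val x, of A] Ane by (auto simp: A_def)
  have "Dd E S r p \<subseteq> Dd E (S \<union> A) r p'"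
    using h(3) Ane unfolding Dd_def by auto
  moreover have "finite (Dd E (S \<union> A) r p')"
    using finS finA by (simp add: fin_Dd)
  ultimately have d: "card (Dd E S r p) \<le> card (Dd E (S \<union> A) r p')" using card_mono by blast
  have cs: "card (S \<union> A) = card S + card A" using finS finA
    by (subst card_Un_disjoint) (auto simp: A_def)
  have "A \<noteq> {}" using Ane A_def by simp
  then have "S \<subset> S \<union> A" by (auto simp: A_def)
  moreover have "inv V E r (S \<union> A) p'"
    using iv h(2) d cs c[folded A_def] by (cases "x \<in> Lf S r p") auto
  ultimately show ?thesis using h(1) by blast
qed

lemma caseB:
  assumes G: "simple_graph V E" and val: "valid V E r S p rk" and iv: "inv V E r S p"
    and x: "x \<in> S" and y: "y \<in> V" "y \<notin> S" and xy: "adj E x y"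
    and c: "card (nbr E y - S) \<ge> 2"
  shows "\<exists>S' p' rk'. S \<subset> S' \<and> valid V E r S' p' rk' \<and> inv V E r S' p'"
proof -
  define B where "B = nbr E y - S"
  have fin: "finite V" using G by (simp add: simple_graph_def)
  have finS: "finite S" using valid_fin[OF val fin] .
  have finB: "finite B" using finite_nbr[OF G] by (simp add: B_def)
  have yn: "{y} \<subseteq> nbr E x" using xy by (simp add: nbr_def)
  obtain p1 rk1 where h1: "valid V E r (S \<union> {y}) p1 rk1"
     "card (Lf (S \<union> {y}) r p1) + (if x \<in> Lf S r p then 1 else 0) = card (Lf S r p) + 1"
     "Lf S r p - {x} \<subseteq> Lf (S \<union> {y}) r p1" "{y} \<subseteq> Lf (S \<union> {y}) r p1"
    using attach_full[OF G val x _ yn] y by auto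
  have "\<not> adj E y y" using adj_V(3)[OF G] by blast
  then have yB: "y \<notin> B" by (auto simp: B_def nbr_def)
  have Bne: "B \<noteq> {}" using c B_def by (metis card.empty not_numeral_le_zero)
  obtain p2 rk2 where h2: "valid V E r (S \<union> {y} \<union> B) p2 rk2"
     "card (Lf (S \<union> {y} \<union> B) r p2) + (if y \<in> Lf (S \<union> {y}) r p1 then 1 else 0) = card (Lf (S \<union> {y}) r p1) + card B"
     "Lf (S \<union> {y}) r p1 - {y} \<subseteq> Lf (S \<union> {y} \<union> B) r p2"
    using attach_full[OF G h1(1), of y B] yB Bne by (auto simp: B_def)
  have "Dd E S r p \<subseteq> Dd E (S \<union> {y} \<union> B) r p2"
  proof
    fix v assume v: "v \<in> Dd E S r p"
    then have "v \<in> Lf S r p" "nbr E v \<subseteq> S" by (auto simp: Dd_def)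
    moreover have "v \<noteq> x" using calculation y xy by (auto simp: nbr_def)
    moreover have "v \<noteq> y" using calculation(1) y Lf_sub[of S r p] by blast
    ultimately show "v \<in> Dd E (S \<union> {y} \<union> B) r p2" using h1(3) h2(3) by (auto simp: Dd_def)
  qed
  moreover have "finite (Dd E (S \<union> {y} \<union> B) r p2)"
    using finS finB by (simp add: fin_Dd)
  ultimately have d: "card (Dd E S r p) \<le> card (Dd E (S \<union> {y} \<union> B) r p2)" using card_mono by blast
  have cs: "card (S \<union> {y} \<union> B) = card S + 1 + card B"
  proof -
    have "card (S \<union> {y} \<union> B) = card (S \<union> {y}) + card B"
      using finS finB y yB by (subst card_Un_disjoint) (auto simp: B_def)
    then show ?thesis using finS y by simp
  qed
  have "S \<subset> S \<union> {y} \<union> B" using y by auto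
  moreover have "inv V E r (S \<union> {y} \<union> B) p2"
    using iv h1(2,4) h2(2) d cs c[folded B_def] by (cases "x \<in> Lf S r p") auto
  ultimately show ?thesis using h2(1) by blast
qed

lemma caseC:
  assumes G: "simple_graph V E" and val: "valid V E r S p rk" and iv: "inv V E r S p"
    and x: "x \<in> S" and y: "y \<in> V" "y \<notin> S" and xy: "adj E x y"
    and z: "z \<in> (Lf S r p - {x}) \<union> {y}" "nbr E z \<subseteq> S \<union> {y}" "z \<notin> Dd E S r p"
  shows "\<exists>S' p' rk'. S \<subset> S' \<and> valid V E r S' p' rk' \<and> inv V E r S' p'"
proof -
  have fin: "finite V" using G by (simp add: simple_graph_def)
  have finS: "finite S" using valid_fin[OF val fin] .
  have yn: "{y} \<subseteq> nbr E x" using xy by (simp add: nbr_def)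
  obtain p1 rk1 where h1: "valid V E r (S \<union> {y}) p1 rk1"
     "card (Lf (S \<union> {y}) r p1) + (if x \<in> Lf S r p then 1 else 0) = card (Lf S r p) + 1"
     "Lf S r p - {x} \<subseteq> Lf (S \<union> {y}) r p1" "{y} \<subseteq> Lf (S \<union> {y}) r p1"
    using attach_full[OF G val x _ yn] y by auto
  have "insert z (Dd E S r p) \<subseteq> Dd E (S \<union> {y}) r p1"
  proof
    fix v assume v: "v \<in> insert z (Dd E S r p)"
    show "v \<in> Dd E (S \<union> {y}) r p1"
    proof (cases "v = z")
      case True then show ?thesis using z h1(3,4) by (auto simp: Dd_def)
    next
      case False
      then have "v \<in> Lf S r p" "nbr E v \<subseteq> S" using v by (auto simp: Dd_def)
      moreover have "v \<noteq> x" using calculation y xy by (auto simp: nbr_def)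
      ultimately show ?thesis using h1(3) by (auto simp: Dd_def)
    qed
  qed
  moreover have "finite (Dd E (S \<union> {y}) r p1)"
    using finS by (simp add: fin_Dd)
  ultimately have "card (insert z (Dd E S r p)) \<le> card (Dd E (S \<union> {y}) r p1)" using card_mono by blast
  moreover have "card (insert z (Dd E S r p)) = card (Dd E S r p) + 1"
    using z(3) finS by (simp add: fin_Dd)
  ultimately have d: "card (Dd E S r p) + 1 \<le> card (Dd E (S \<union> {y}) r p1)" by simp
  have xL: "x \<in> Lf S r p \<or> True" by simp
  have cs: "card (S \<union> {y}) = card S + 1" using finS y by simp
  have "S \<subset> S \<union> {y}" using y by auto
  moreover have "inv V E r (S \<union> {y}) p1"
    using iv h1(2) d cs by (cases "x \<in> Lf S r p") auto
  ultimately show ?thesis using h1(1) by blast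
qed



lemma card1_eq: "finite A \<Longrightarrow> card A \<le> 1 \<Longrightarrow> y \<in> A \<Longrightarrow> A = {y}"
  by (metis card_le_Suc0_iff_eq One_nat_def singletonI subsetI subset_antisym singletonD)

lemma step:
  assumes G: "simple_graph V E" and C: "connected_graph V E"
    and deg: "\<forall>v\<in>V. degree E v = 1 \<or> degree E v \<ge> 3"
    and val: "valid V E r S p rk" and iv: "inv V E r S p" and ne: "S \<noteq> V"
  shows "\<exists>S' p' rk'. S \<subset> S' \<and> valid V E r S' p' rk' \<and> inv V E r S' p'"
proof (cases "\<exists>x\<in>S. nbr E x - S \<noteq> {} \<and> (x \<notin> Lf S r p \<or> card (nbr E x - S) \<ge> 2)")
  case True
  then show ?thesis using caseA[OF G val iv] by blast
next
  case nA: False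
  show ?thesis
  proof (cases "\<exists>x y. x \<in> S \<and> y \<in> V \<and> y \<notin> S \<and> adj E x y \<and> card (nbr E y - S) \<ge> 2")
    case True
    then show ?thesis using caseB[OF G val iv] by blast
  next
    case nB: False
    have SV: "S \<subseteq> V" "S \<noteq> {}" using val by (auto simp: valid_def)
    obtain x y where xy: "x \<in> S" "y \<in> V" "y \<notin> S" "adj E x y"
      using frontier[OF G C SV ne] by blast
    have yx: "y \<in> nbr E x" using xy by (simp add: nbr_def)
    then have xL: "x \<in> Lf S r p" using nA xy by blast
    have cy: "card (nbr E y - S) \<le> 1" using nB xy by force
    have fy: "finite (nbr E y)" using finite_nbr[OF G] .
    show ?thesis
    proof (cases "\<exists>x'\<in>S. x' \<noteq> x \<and> adj E y x'")
      case True
      then obtain x' where x': "x' \<in> S" "x' \<noteq> x" "adj E y x'" by blast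
      have yx': "y \<in> nbr E x' - S" using x'(3) xy(3) adj_sym[of E y x'] by (simp add: nbr_def)
      then have "x' \<in> Lf S r p" "card (nbr E x' - S) \<le> 1" using nA x' by force+
      moreover have "nbr E x' - S = {y}"
        using card1_eq[OF _ calculation(2) yx'] finite_nbr[OF G] by blast
      ultimately have z: "x' \<in> (Lf S r p - {x}) \<union> {y}" "nbr E x' \<subseteq> S \<union> {y}" "x' \<notin> Dd E S r p"
        using x' yx' by (auto simp: Dd_def)
      show ?thesis using caseC[OF G val iv xy z] .
    next
      case False
      then have "nbr E y \<inter> S \<subseteq> {x}" by (auto simp: nbr_def)
      then have "nbr E y \<subseteq> {x} \<union> (nbr E y - S)" by blast
      then have "card (nbr E y) \<le> card ({x} \<union> (nbr E y - S))" using fy by (simp add: card_mono)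
      also have "\<dots> \<le> 1 + card (nbr E y - S)" using card_Un_le[of "{x}"] by simp
      finally have "card (nbr E y) \<le> 2" using cy by simp
      then have "degree E y \<le> 2" using degree_nbr[OF G, of y] by simp
      then have "degree E y = 1" using deg xy(2) by fastforce
      then have c1: "card (nbr E y) \<le> 1" using degree_nbr[OF G, of y] by simp
      have "x \<in> nbr E y" using xy(4) adj_sym[of E x y] by (simp add: nbr_def)
      then have "nbr E y = {x}" using card1_eq[OF fy c1] by blast
      then have z2: "nbr E y \<subseteq> S \<union> {y}" using xy(1) by simp
      have z3: "y \<notin> Dd E S r p" using xy(3) Dd_sub2[of E S r p] by blast
      have z1: "y \<in> (Lf S r p - {x}) \<union> {y}" by simp
      note z = z1 z2 z3
      show ?thesis using caseC[OF G val iv xy z] .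
    qed
  qed
qed

lemma grow:
  assumes G: "simple_graph V E" and C: "connected_graph V E"
    and deg: "\<forall>v\<in>V. degree E v = 1 \<or> degree E v \<ge> 3"
  shows "valid V E r S p rk \<Longrightarrow> inv V E r S p \<Longrightarrow> \<exists>p rk. valid V E r V p rk \<and> inv V E r V p"
proof (induction "card (V - S)" arbitrary: S p rk rule: less_induct)
  case less
  show ?case
  proof (cases "S = V")
    case True then show ?thesis using less by blast
  next
    case False
    obtain S' p' rk' where h: "S \<subset> S'" "valid V E r S' p' rk'" "inv V E r S' p'"
      using step[OF G C deg less.prems False] by blast
    have fin: "finite V" using G by (simp add: simple_graph_def)
    have "S' \<subseteq> V" using h(2) by (simp add: valid_def)
    then have "V - S' \<subset> V - S" using h(1) less.prems(1) by (auto simp: valid_def)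
    then have "card (V - S') < card (V - S)" using fin by (simp add: psubset_card_mono)
    then show ?thesis using less.hyps h by blast
  qed
qed



lemma root_walks:
  assumes val: "valid V E r V p rk" and T: "T = (\<lambda>v. {v, p v}) ` (V - {r})"
  shows "v \<in> V \<Longrightarrow> (\<exists>xs. is_walk V T xs \<and> hd xs = v \<and> last xs = r) \<and>
                      (\<exists>xs. is_walk V T xs \<and> hd xs = r \<and> last xs = v)"
proof (induction v rule: measure_induct_rule[of rk])
  case (less v)
  show ?case
  proof (cases "v = r")
    case True
    then have "is_walk V T [r]" using val by (simp add: is_walk_def valid_def)
    then show ?thesis using True by (intro conjI exI[of _ "[r]"]) simp_all
  next
    case False
    then have vV: "v \<in> V - {r}" using less.prems by simp
    then have pv: "p v \<in> V" "rk (p v) < rk v" using val by (auto simp: valid_def)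
    obtain xs ys where xs: "is_walk V T xs" "hd xs = p v" "last xs = r"
      and ys: "is_walk V T ys" "hd ys = r" "last ys = p v"
      using less.IH[OF pv(2) pv(1)] by blast
    have inT: "{v, p v} \<in> T" using T vV by blast
    have e1: "adj T v (p v)" using inT by (simp add: adj_def)
    have e2: "adj T (p v) v" using inT by (simp add: adj_def insert_commute)
    have xne: "xs \<noteq> []" using xs(1) by (simp add: is_walk_def)
    have yne: "ys \<noteq> []" using ys(1) by (simp add: is_walk_def)
    have w1: "is_walk V T (v # xs)" using walk_Cons[of V T v xs] xs e1 less.prems by simp
    have wv: "is_walk V T [v]" using less.prems by (simp add: is_walk_def)
    have w2: "is_walk V T [p v, v]" using walk_Cons[of V T "p v" "[v]"] e2 pv wv by simp
    have w3: "is_walk V T (ys @ tl [p v, v])" using walk_append_tl[OF ys(1) w2] ys(3) by simp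
    have "hd (ys @ [v]) = r" "last (ys @ [v]) = v" using ys yne by auto
    moreover have "hd (v # xs) = v" "last (v # xs) = r" using xs xne by auto
    ultimately show ?thesis using w1 w3 by auto
  qed
qed

lemma tree_conn:
  assumes val: "valid V E r V p rk" and T: "T = (\<lambda>v. {v, p v}) ` (V - {r})"
  shows "connected_graph V T"
  unfolding connected_graph_def
proof (intro conjI ballI)
  show "V \<noteq> {}" using val by (auto simp: valid_def)
next
  fix u v assume uv: "u \<in> V" "v \<in> V"
  obtain xs where xs: "is_walk V T xs" "hd xs = u" "last xs = r" using root_walks[OF val T uv(1)] by blast
  obtain ys where ys: "is_walk V T ys" "hd ys = r" "last ys = v" using root_walks[OF val T uv(2)] by blast
  have ne: "xs \<noteq> []" "ys \<noteq> []" using xs ys by (auto simp: is_walk_def)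
  show "\<exists>zs. is_walk V T zs \<and> hd zs = u \<and> last zs = v"
    using walk_append_tl[OF xs(1) ys(1)] last_append_tl[OF ne(2,1)] xs ys ne
    by (intro exI[of _ "xs @ tl ys"]) auto
qed

lemma tree_acyc:
  assumes val: "valid V E r V p rk" and T: "T = (\<lambda>v. {v, p v}) ` (V - {r})"
  shows "acyclic_graph V T"
  unfolding acyclic_graph_def
proof
  assume "\<exists>xs. is_cycle V T xs"
  then obtain xs where c: "length xs \<ge> 3" "distinct xs" "is_walk V T xs" "adj T (last xs) (hd xs)"
    by (auto simp: is_cycle_def)
  define k where "k = length xs"
  have ne: "xs \<noteq> []" using c by auto
  have "Max (rk ` set xs) \<in> rk ` set xs" using ne by (simp add: Max_in)
  then obtain m where m: "m \<in> set xs" "rk m = Max (rk ` set xs)" by auto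
  have mx: "\<forall>a\<in>set xs. rk a \<le> rk m" using m by simp
  have key: "a = p m" if ka: "a \<in> set xs" "adj T m a" for a
  proof -
    obtain w where w: "w \<in> V - {r}" "{m, a} = {w, p w}" using ka(2) T by (auto simp: adj_def)
    then have "(m = w \<and> a = p w) \<or> (m = p w \<and> a = w)" by (auto simp: doubleton_eq_iff)
    moreover have "\<not> (m = p w \<and> a = w)"
    proof
      assume "m = p w \<and> a = w"
      then have "rk m < rk a" using w val by (auto simp: valid_def)
      then show False using mx ka(1) by force
    qed
    ultimately show ?thesis by blast
  qed
  obtain i where i: "i < k" "xs ! i = m" using m(1) by (auto simp: in_set_conv_nth k_def)
  have adjw: "adj T (xs ! j) (xs ! Suc j)" if "Suc j < k" for j
    using c(3) that by (simp add: is_walk_def k_def)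
  have lh: "last xs = xs ! (k - 1)" "hd xs = xs ! 0" using ne by (auto simp: k_def last_conv_nth hd_conv_nth)
  define j1 where "j1 = (if Suc i < k then Suc i else 0)"
  define j0 where "j0 = (if i = 0 then k - 1 else i - 1)"
  have a1: "adj T m (xs ! j1)"
  proof (cases "Suc i < k")
    case True then show ?thesis using adjw[OF True] i(2) by (simp add: j1_def)
  next
    case False then have "i = k - 1" using i by simp
    then show ?thesis using c(4) lh i by (simp add: j1_def)
  qed
  have a0: "adj T m (xs ! j0)"
  proof (cases "i = 0")
    case True then show ?thesis using c(4) lh i by (simp add: j0_def adj_sym)
  next
    case False then have "Suc (i - 1) = i" by simp
    then show ?thesis using adjw[of "i - 1"] i False by (simp add: j0_def adj_sym)
  qed
  have jk: "j1 < k" "j0 < k" using i c(1) by (auto simp: j1_def j0_def k_def)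
  have "xs ! j1 = p m" "xs ! j0 = p m" using key a1 a0 jk by (auto simp: k_def)
  then have "xs ! j1 = xs ! j0" by simp
  then have "j1 = j0" using c(2) jk nth_eq_iff_index_eq unfolding k_def by metis
  then show False using i c(1) by (auto simp: j1_def j0_def k_def split: if_splits)
qed

lemma tree_final:
  assumes G: "simple_graph V E" and val: "valid V E r V p rk" and T: "T = (\<lambda>v. {v, p v}) ` (V - {r})"
  shows "spanning_tree V E T" "Lf V r p \<subseteq> leaves V T"
proof -
  have TE: "T \<subseteq> E" using val T by (auto simp: valid_def)
  have "simple_graph V T" using G TE by (auto simp: simple_graph_def)
  then show "spanning_tree V E T" using TE tree_conn[OF val T] tree_acyc[OF val T]
    by (simp add: spanning_tree_def is_tree_def)
  show "Lf V r p \<subseteq> leaves V T"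
  proof
    fix v assume v: "v \<in> Lf V r p"
    then have v1: "v \<in> V" "v \<noteq> r" "\<forall>u\<in>V-{r}. p u \<noteq> v" by (auto simp: Lf_def)
    have "{e \<in> T. v \<in> e} = {{v, p v}}"
    proof
      show "{e \<in> T. v \<in> e} \<subseteq> {{v, p v}}" using v1 T by auto
      show "{{v, p v}} \<subseteq> {e \<in> T. v \<in> e}" using v1 T by auto
    qed
    then have "degree T v = 1" by (simp add: degree_def)
    then show "v \<in> leaves V T" using v1 by (simp add: leaves_def)
  qed
qed

theorem mainTheorem13:
  "\<exists>c::real. c > 0 \<and>
     (\<forall>(V::nat set) E. simple_graph V E \<and> connected_graph V E \<and> card V \<ge> 2 \<and>
        (\<forall>v\<in>V. degree E v = 1 \<or> degree E v \<ge> 3) \<longrightarrow>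
        (\<exists>T. spanning_tree V E T \<and> real (card (leaves V T)) \<ge> c * real (card V)))"
proof (intro exI[of _ "1/8"] conjI allI impI)
  show "(0::real) < 1/8" by simp
next
  fix V :: "nat set" and E
  assume h: "simple_graph V E \<and> connected_graph V E \<and> card V \<ge> 2 \<and> (\<forall>v\<in>V. degree E v = 1 \<or> degree E v \<ge> 3)"
  then have G: "simple_graph V E" and C: "connected_graph V E" and n2: "card V \<ge> 2"
    and deg: "\<forall>v\<in>V. degree E v = 1 \<or> degree E v \<ge> 3" by auto
  have fin: "finite V" using G by (simp add: simple_graph_def)
  obtain r where r: "r \<in> V" using n2 by fastforce
  have v0: "valid V E r {r} (\<lambda>v. r) (\<lambda>v. 0)" using r by (simp add: valid_def)
  have i0: "inv V E r {r} (\<lambda>v. r)" by simp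
  obtain p rk where f: "valid V E r V p rk" "inv V E r V p" using grow[OF G C deg v0 i0] by blast
  have "Dd E V r p = Lf V r p" using nbr_V[OF G] by (auto simp: Dd_def)
  then have n4: "card V \<le> 4 * card (Lf V r p) + 1" using f(2) by simp
  define T where "T = (\<lambda>v. {v, p v}) ` (V - {r})"
  note tf = tree_final[OF G f(1) T_def]
  have "finite (leaves V T)" using fin by (simp add: leaves_def)
  then have "card (Lf V r p) \<le> card (leaves V T)" using tf(2) card_mono by blast
  then have "real (card V) \<le> 4 * real (card (leaves V T)) + 1" using n4 by linarith
  moreover have "real (card V) \<ge> 2" using n2 by simp
  ultimately have "1/8 * real (card V) \<le> real (card (leaves V T))" by linarith
  then show "\<exists>T. spanning_tree V E T \<and> 1/8 * real (card V) \<le> real (card (leaves V T))"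
    using tf(1) by blast
qed

end
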